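(* Consider a regular spherically symmetric, asymptotically flat initial data set for the Einstein–Maxwell equations (no magnetic charge). Assume there is a ball $\mathcal{B}=\{l\le l_0\}$ of finite area radius $\mathcal{R}=r(l_0)>0$ such that outside $\mathcal{B}$ the data are electrovacuum and in $\mathcal{B}$ the dominant energy condition holds. Let $Q$ be the total charge of $\mathcal{B}$. If $2\mathcal{R}\le |Q|$, then there are trapped surfaces enclosing $\mathcal{B}$, i.e. the exterior region $\{l\ge l_0\}$ is not untrapped.
   Context: Regular spherically symmetric initial data: manifold $\mathbb{R}^3$, metric $h=dl^2+r(l)^2(d\theta^2+\sin^2\theta\,d\phi^2)$, $r$ smooth, $r(0)=0$, $r'(0)=1$; $K_{ij}=n_in_jK_l+(h_{ij}-n_in_j)K_r$, $n=\partial_l$; constraints $K_r(K_r+2K_l)-\frac1{r^2}(r'^2+2rr''-1)=8\pi\mu$, $K_r'+\frac{r'}{r}(K_r-K_l)=4\pi j$; dominant energy condition $\mu\ge|j|$; radial electric field $E$ with $\frac1{r^2}(Er^2)'=4\pi\rho$, magnetic field zero; $\mu=\mu_M+\frac{E^2}{8\pi}$. Electrovacuum: $\mu_M=0$, $j=0$, $\rho=0$. Charge $Q=4\pi\int_0^{l_0}\rho r^2dl=E(l_0)r(l_0)^2$. Asymptotic flatness: $h_{ij}=\delta_{ij}+O(r^{-1})$ with derivatives falling off one order faster each, $K_{ij}=O(r^{-2})$, $\partial K=O(r^{-3})$. Null expansions $\theta^\pm=\frac2r(r'\pm K_rr)$; a region is untrapped if $\theta^+\theta^->0$ there and trapped if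 $\theta^+\theta^-<0$. *)

theory Defs
  imports "HOL-Analysis.Analysis" "HOL-Library.Landau_Symbols"
begin

text \<open>Spherically symmetric initial data are described by functions of the radial
 proper-distance coordinate l (only l \<ge> 0 is physically relevant).\<close>

definition smooth_fun :: "(real \<Rightarrow> real) \<Rightarrow> bool" where
  "smooth_fun f \<longleftrightarrow> (\<forall>n x. ((deriv ^^ n) f) differentiable (at x))"

text \<open>Regularity at the centre: r smooth with r(0)=0, r'(0)=1, r>0 away from the centre;
 smoothness of the tensors on R^3 is encoded by smooth odd/even extensions to the real line.\<close>
definition regular_data ::
  "(real \<Rightarrow> real) \<Rightarrow> (real \<Rightarrow> real) \<Rightarrow> (real \<Rightarrow> real) \<Rightarrow> (real \<Rightarrow> real) \<Rightarrow> bool" where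
  "regular_data r Kl Kr E \<longleftrightarrow>
     smooth_fun r \<and> smooth_fun Kl \<and> smooth_fun Kr \<and> smooth_fun E \<and>
     r 0 = 0 \<and> deriv r 0 = 1 \<and> (\<forall>l>0. r l > 0) \<and>
     (\<forall>l. r (-l) = - r l) \<and> (\<forall>l. Kl (-l) = Kl l) \<and> (\<forall>l. Kr (-l) = Kr l) \<and>
     (\<forall>l. E (-l) = - E l) \<and> Kl 0 = Kr 0"

text \<open>Asymptotic flatness, expressed in the area-radius chart x = r(l) n:
 h_ij - delta_ij = O(1/r), one extra power of decay per derivative, K = O(r^-2), dK = O(r^-3).\<close>
definition asymptotically_flat ::
  "(real \<Rightarrow> real) \<Rightarrow> (real \<Rightarrow> real) \<Rightarrow> (real \<Rightarrow> real) \<Rightarrow> bool" where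
  "asymptotically_flat r Kl Kr \<longleftrightarrow>
     filterlim r at_top at_top \<and>
     (\<lambda>l. 1 / (deriv r l)\<^sup>2 - 1) \<in> O[at_top](\<lambda>l. 1 / r l) \<and>
     (\<lambda>l. deriv (\<lambda>s. 1 / (deriv r s)\<^sup>2) l) \<in> O[at_top](\<lambda>l. 1 / (r l)\<^sup>2) \<and>
     Kl \<in> O[at_top](\<lambda>l. 1 / (r l)\<^sup>2) \<and> Kr \<in> O[at_top](\<lambda>l. 1 / (r l)\<^sup>2) \<and>
     deriv Kl \<in> O[at_top](\<lambda>l. 1 / (r l)^3) \<and> deriv Kr \<in> O[at_top](\<lambda>l. 1 / (r l)^3)"

definition theta_plus :: "(real \<Rightarrow> real) \<Rightarrow> (real \<Rightarrow> real) \<Rightarrow> real \<Rightarrow> real" where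
  "theta_plus r Kr l = 2 / r l * (deriv r l + Kr l * r l)"

definition theta_minus :: "(real \<Rightarrow> real) \<Rightarrow> (real \<Rightarrow> real) \<Rightarrow> real \<Rightarrow> real" where
  "theta_minus r Kr l = 2 / r l * (deriv r l - Kr l * r l)"

definition untrapped_on :: "(real \<Rightarrow> real) \<Rightarrow> (real \<Rightarrow> real) \<Rightarrow> real set \<Rightarrow> bool" where
  "untrapped_on r Kr S \<longleftrightarrow> (\<forall>l\<in>S. theta_plus r Kr l * theta_minus r Kr l > 0)"

end

theory Submission
  imports Defs
begin

lemma smooth_D: "smooth_fun f \<Longrightarrow> (f has_real_derivative deriv f x) (at x)"
proof -
  assume "smooth_fun f"
  then have "((deriv ^^ 0) f) differentiable (at x)" unfolding smooth_fun_def by blast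
  then show ?thesis by (simp add: DERIV_deriv_iff_real_differentiable)
qed

lemma smooth_DD: "smooth_fun f \<Longrightarrow> (deriv f has_real_derivative deriv (deriv f) x) (at x)"
proof -
  assume "smooth_fun f"
  then have "((deriv ^^ 1) f) differentiable (at x)" unfolding smooth_fun_def by blast
  then show ?thesis by (simp add: DERIV_deriv_iff_real_differentiable)
qed

lemma smooth_cont: "smooth_fun f \<Longrightarrow> continuous_on S f"
  by (meson DERIV_isCont continuous_at_imp_continuous_on smooth_D)

lemma smooth_cont1: "smooth_fun f \<Longrightarrow> continuous_on S (deriv f)"
  by (meson DERIV_isCont continuous_at_imp_continuous_on smooth_DD)

lemma mass_deriv:
  fixes r Kr :: "real \<Rightarrow> real"
  assumes "smooth_fun r" "smooth_fun Kr"
  shows "((\<lambda>l. r l / 2 * (1 - (deriv r l)\<^sup>2 + (Kr l)\<^sup>2 * (r l)\<^sup>2)) has_real_derivative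
     (deriv r l/2*(1 - (deriv r l)^2 + (Kr l)^2 * (r l)^2) + r l/2*(-2*deriv r l*deriv (deriv r) l + 2*Kr l*deriv Kr l*(r l)^2 + 2*(Kr l)^2*r l*deriv r l))) (at l)"
  using smooth_D[OF assms(1), of l] smooth_DD[OF assms(1), of l] smooth_D[OF assms(2), of l]
  by (auto intro!: derivative_eq_intros simp: field_simps power2_eq_square)

lemma mass_alg:
  fixes r r1 r2 k k1 kl mu j :: real
  assumes rp: "r > 0"
   and ham: "k * (k + 2 * kl) - (r1\<^sup>2 + 2 * r * r2 - 1) / r\<^sup>2 = 8 * pi * mu"
   and mom: "k1 + r1 / r * (k - kl) = 4 * pi * j"
  shows "r1/2*(1 - r1^2 + k^2 * r^2) + r/2*(-2*r1*r2 + 2*k*k1*r^2 + 2*k^2*r*r1) = 4*pi*r^2*(mu*r1 + j*r*k)"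
proof -
  have a: "4*pi*mu = (k * (k + 2 * kl) - (r1\<^sup>2 + 2 * r * r2 - 1) / r\<^sup>2)/2" using ham by simp
  have b: "4*pi*j = k1 + r1 / r * (k - kl)" using mom by simp
  have "4*pi*r^2*(mu*r1 + j*r*k) = r^2*(r1*(4*pi*mu) + r*k*(4*pi*j))" by (simp add: algebra_simps)
  also have "\<dots> = r^2*(r1*((k * (k + 2 * kl) - (r1\<^sup>2 + 2 * r * r2 - 1) / r\<^sup>2)/2) + r*k*(k1 + r1 / r * (k - kl)))"
    by (simp only: a b)
  also have "\<dots> = r1/2*(1 - r1^2 + k^2 * r^2) + r/2*(-2*r1*r2 + 2*k*k1*r^2 + 2*k^2*r*r1)"
    using rp by (simp add: field_simps power2_eq_square)
  finally show ?thesis by simp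
qed

lemma big_r:
  fixes r :: "real \<Rightarrow> real"
  assumes "filterlim r at_top at_top"
  shows "\<exists>b\<ge>l0. r b \<ge> c"
proof -
  have "eventually (\<lambda>l. r l \<ge> c) at_top" using assms filterlim_at_top by blast
  then obtain N where N: "\<And>n. n \<ge> N \<Longrightarrow> r n \<ge> c" unfolding eventually_at_top_linorder by blast
  show ?thesis using N[of "max N l0"] by (intro exI[of _ "max N l0"]) auto
qed

lemma dec_alg:
  fixes mu j r1 x :: real
  assumes "mu \<ge> \<bar>j\<bar>" "r1 > 0" "r1\<^sup>2 > x\<^sup>2"
  shows "mu * r1 + j * x \<ge> 0"
proof -
  have "\<bar>x\<bar> < r1" using assms(2,3) by (metis abs_of_pos power2_abs power_less_imp_less_base abs_ge_zero)
  then have "\<bar>j\<bar> * \<bar>x\<bar> \<le> mu * r1" using assms(1) by (intro mult_mono) auto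
  then show ?thesis by (smt (verit) abs_mult abs_le_iff)
qed

lemma sq_ne: assumes "(a::real)^2 - b * c > 0" "b \<ge> 0" "c \<ge> 0" shows "a \<noteq> 0"
proof
  assume "a = 0"
  note h = assms this
  then have "b*c < 0" by simp
  moreover have "b*c \<ge> 0" using h by (intro mult_nonneg_nonneg)
  ultimately show False by linarith
qed
lemma t1: fixes Q r d :: real assumes "r > 0" shows "4*pi*r^2*((Q / r\<^sup>2)\<^sup>2 / (8 * pi) * d + 0 * r * k) = Q\<^sup>2 * d / (2 * r\<^sup>2)"
  using assms by (simp add: field_simps power2_eq_square)
lemma t2: fixes Q r d :: real assumes "r > 0" shows "Q\<^sup>2 * d / (2 * r\<^sup>2) + (- (Q\<^sup>2 * (2 * d)) / (2 * r)\<^sup>2) = 0"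
  using assms by (simp add: field_simps power2_eq_square)
lemma t3: fixes Q m :: real assumes "\<bar>Q\<bar> > 0" "1 - 2 * m / \<bar>Q\<bar> > 0" shows "m < \<bar>Q\<bar> / 2"
  using assms by (simp add: field_simps)
lemma t4: fixes Q m :: real assumes "\<bar>Q\<bar> > 0" shows "m + Q\<^sup>2 / (2 * \<bar>Q\<bar>) = m + \<bar>Q\<bar> / 2"
  using assms by (simp add: field_simps power2_eq_square abs_mult_self_eq)
lemma t5: fixes Q R :: real assumes "R > 0" "\<bar>Q\<bar> * (2 * R) \<le> \<bar>Q\<bar> * \<bar>Q\<bar>" shows "\<bar>Q\<bar> \<le> Q\<^sup>2 / (2 * R)"
  using assms by (simp add: field_simps power2_eq_square abs_mult_self_eq)

theorem mainTheorem3: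
  fixes r Kl Kr E mu j rho :: "real \<Rightarrow> real" and l0 Q :: real
  assumes reg: "regular_data r Kl Kr E"
    and af: "asymptotically_flat r Kl Kr"
    and ham: "\<And>l. l > 0 \<Longrightarrow>
      Kr l * (Kr l + 2 * Kl l) - ((deriv r l)\<^sup>2 + 2 * r l * deriv (deriv r) l - 1) / (r l)\<^sup>2
        = 8 * pi * mu l"
    and mom: "\<And>l. l > 0 \<Longrightarrow> deriv Kr l + deriv r l / r l * (Kr l - Kl l) = 4 * pi * j l"
    and gauss: "\<And>l. l > 0 \<Longrightarrow> deriv (\<lambda>s. E s * (r s)\<^sup>2) l / (r l)\<^sup>2 = 4 * pi * rho l"
    and l0: "l0 > 0"
    and dec: "\<And>l. 0 \<le> l \<Longrightarrow> l \<le> l0 \<Longrightarrow> mu l \<ge> \<bar>j l\<bar>"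
    and ev_mu: "\<And>l. l > l0 \<Longrightarrow> mu l - (E l)\<^sup>2 / (8 * pi) = 0"
    and ev_j: "\<And>l. l > l0 \<Longrightarrow> j l = 0"
    and ev_rho: "\<And>l. l > l0 \<Longrightarrow> rho l = 0"
    and charge: "Q = 4 * pi * integral {0..l0} (\<lambda>l. rho l * (r l)\<^sup>2)"
    and bound: "2 * r l0 \<le> \<bar>Q\<bar>"
  shows "\<not> untrapped_on r Kr {l0..}"
proof
  assume U: "untrapped_on r Kr {l0..}"
  have sr: "smooth_fun r" and sK: "smooth_fun Kr" and sE: "smooth_fun E"
    and r0: "r 0 = 0" and rd0: "deriv r 0 = 1" and rpos: "\<And>l. l > 0 \<Longrightarrow> r l > 0"
    using reg unfolding regular_data_def by auto
  have rinf: "filterlim r at_top at_top" using af unfolding asymptotically_flat_def by auto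
  define m where "m l = r l / 2 * (1 - (deriv r l)\<^sup>2 + (Kr l)\<^sup>2 * (r l)\<^sup>2)" for l
  have dm: "(m has_real_derivative 4*pi*(r l)^2*(mu l*deriv r l + j l*r l*Kr l)) (at l)" if "l > 0" for l
  proof -
    have e: "deriv r l/2*(1 - (deriv r l)^2 + (Kr l)^2 * (r l)^2) + r l/2*(-2*deriv r l*deriv (deriv r) l + 2*Kr l*deriv Kr l*(r l)^2 + 2*(Kr l)^2*r l*deriv r l)
      = 4*pi*(r l)^2*(mu l*deriv r l + j l*r l*Kr l)"
      by (rule mass_alg[OF rpos[OF that] ham[OF that] mom[OF that]])
    show ?thesis using mass_deriv[OF sr sK, of l] unfolding e m_def[abs_def] .
  qed
  have contm: "continuous_on S m" for S
    unfolding m_def using smooth_cont[OF sr] smooth_cont1[OF sr] smooth_cont[OF sK]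
    by (intro continuous_intros) auto
  have contr: "continuous_on S r" for S using smooth_cont[OF sr] .
  have contr1: "continuous_on S (deriv r)" for S using smooth_cont1[OF sr] .
  have m0: "m 0 = 0" unfolding m_def r0 by simp
  have frel: "(deriv r l)\<^sup>2 - (Kr l)\<^sup>2 * (r l)\<^sup>2 = 1 - 2 * m l / r l" if "l > 0" for l
    using rpos[OF that] unfolding m_def by (simp add: field_simps)
  have fpos: "(deriv r l)\<^sup>2 - (Kr l)\<^sup>2 * (r l)\<^sup>2 > 0" if "l \<ge> l0" for l
  proof -
    have rl: "r l > 0" using rpos l0 that by auto
    have "theta_plus r Kr l * theta_minus r Kr l > 0" using U that unfolding untrapped_on_def by auto
    moreover have "theta_plus r Kr l * theta_minus r Kr l = 4 / (r l)^2 * ((deriv r l)\<^sup>2 - (Kr l)\<^sup>2 * (r l)\<^sup>2)"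
      unfolding theta_plus_def theta_minus_def using rl by (simp add: field_simps power2_eq_square)
    ultimately show ?thesis using rl by (simp add: zero_less_divide_iff)
  qed
  have rd_ne: "deriv r l \<noteq> 0" if "l \<ge> l0" for l
    using sq_ne[OF fpos[OF that]] by simp
  have rd_l0: "deriv r l0 > 0"
  proof (rule ccontr)
    assume "\<not> deriv r l0 > 0"
    then have neg0: "deriv r l0 < 0" using rd_ne[of l0] by auto
    have neg: "deriv r l < 0" if hl: "l \<ge> l0" for l
    proof (rule ccontr)
      assume "\<not> deriv r l < 0"
      then obtain x where "l0 \<le> x" "x \<le> l" "deriv r x = 0"
        using IVT'[of "deriv r" l0 0 l] neg0 hl contr1 by force
      then show False using rd_ne by auto
    qed
    obtain b where b: "b \<ge> l0" "r b \<ge> r l0 + 1" using big_r[OF rinf] by blast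
    have "r b \<le> r l0"
      by (rule DERIV_nonpos_imp_decreasing_open[OF b(1)])
        (use neg smooth_D[OF sr] contr in \<open>auto intro: less_imp_le\<close>)
    then show False using b by auto
  qed
  have ml0: "m l0 \<ge> 0"
  proof (rule ccontr)
    assume "\<not> m l0 \<ge> 0"
    then have mneg: "m l0 < 0" by auto
    define S where "S = {0..l0} \<inter> {l. 0 \<le> m l}"
    have S0: "0 \<in> S" unfolding S_def using m0 l0 by auto
    have Sb: "bdd_above S" unfolding S_def by (auto intro: bdd_aboveI[of _ l0])
    have Sc: "closed S" unfolding S_def
      by (intro closed_Int closed_atLeastAtMost closed_Collect_le continuous_intros contm)
    define a where "a = Sup S"
    have aS: "a \<in> S" unfolding a_def using closed_contains_Sup[OF _ Sb Sc] S0 by auto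
    have a0: "0 \<le> a" "a \<le> l0" "m a \<ge> 0" using aS unfolding S_def by auto
    have al0: "a < l0" using a0 mneg by (cases "a = l0") auto
    have mneg2: "m l < 0" if "a < l" "l \<le> l0" for l
    proof (rule ccontr)
      assume "\<not> m l < 0"
      then have "l \<in> S" unfolding S_def using that a0 by auto
      then have "l \<le> a" unfolding a_def using Sb by (simp add: cSup_upper)
      then show False using that by auto
    qed
    have f1: "(deriv r l)\<^sup>2 - (Kr l)\<^sup>2 * (r l)\<^sup>2 > 1" if "a < l" "l \<le> l0" for l
    proof -
      have "l > 0" using that a0 by auto
      have "m l / r l < 0" using mneg2[OF that] rpos[OF \<open>l > 0\<close>] by (simp add: divide_neg_pos)
      then show ?thesis using frel[OF \<open>l > 0\<close>] by linarith
    qed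
    have rne: "deriv r l \<noteq> 0" if "a < l" "l \<le> l0" for l
      using sq_ne[of _ "(Kr l)\<^sup>2" "(r l)\<^sup>2"] f1[OF that] by simp
    have rpos2: "deriv r l > 0" if hl: "a < l" "l \<le> l0" for l
    proof (rule ccontr)
      assume "\<not> deriv r l > 0"
      then obtain x where "l \<le> x" "x \<le> l0" "deriv r x = 0"
        using IVT'[of "deriv r" l 0 l0] rd_l0 hl contr1 by force
      then show False using rne hl by auto
    qed
    have "m a \<le> m l0"
    proof (rule DERIV_nonneg_imp_increasing_open[OF a0(2) _ contm])
      fix x assume x: "a < x" "x < l0"
      have x0: "x > 0" using x a0 by auto
      have "mu x * deriv r x + j x * (r x * Kr x) \<ge> 0"
      proof (rule dec_alg)
        show "\<bar>j x\<bar> \<le> mu x" using dec[of x] x a0 by auto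
        show "deriv r x > 0" using rpos2 x by auto
        show "(deriv r x)\<^sup>2 > (r x * Kr x)\<^sup>2" using f1[of x] x by (simp add: power_mult_distrib algebra_simps)
      qed
      then have "4*pi*(r x)^2*(mu x*deriv r x + j x*r x*Kr x) \<ge> 0"
        by (simp add: mult.assoc)
      then show "\<exists>y. (m has_real_derivative y) (at x) \<and> 0 \<le> y" using dm[OF x0] by blast
    qed
    then show False using a0 mneg by auto
  qed
  define G where "G l = E l * (r l)\<^sup>2" for l
  have dG: "(G has_real_derivative deriv G l) (at l)" for l
  proof -
    have "(G has_real_derivative (deriv E l * (r l)\<^sup>2 + E l * (2 * r l * deriv r l))) (at l)"
      unfolding G_def[abs_def] using smooth_D[OF sE, of l] smooth_D[OF sr, of l]
      by (auto intro!: derivative_eq_intros)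
    then show ?thesis using DERIV_deriv_iff_real_differentiable real_differentiable_def by blast
  qed
  have contG: "continuous_on S G" for S
    using dG by (meson DERIV_isCont continuous_at_imp_continuous_on)
  have Gc: "G l = G l0" if "l \<ge> l0" for l
  proof (rule DERIV_isconst2[of l0 "l+1"])
    show "continuous_on {l0..l+1} G" by (rule contG)
    fix x assume x: "l0 < x" "x < l + 1"
    have "deriv G x / (r x)\<^sup>2 = 0" using gauss[of x] ev_rho[of x] x l0 unfolding G_def[abs_def] by auto
    then have "deriv G x = 0" using rpos[of x] x l0 by auto
    then show "(G has_real_derivative 0) (at x)" using dG[of x] by simp
  qed (use that in auto)
  have G0: "G 0 = 0" unfolding G_def r0 by simp
  have QG: "Q = G l0"
  proof -
    have "(deriv G has_integral (G l0 - G 0)) {0..l0}"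
      by (rule fundamental_theorem_of_calculus) (use l0 dG in \<open>auto simp: has_real_derivative_iff_has_vector_derivative intro: has_vector_derivative_at_within\<close>)
    then have I0: "((\<lambda>l. deriv G l * (1/(4*pi))) has_integral (G l0 * (1/(4*pi)))) {0..l0}"
      using has_integral_mult_left[of "deriv G" "G l0 - G 0" "{0..l0}" "1/(4*pi)"] G0 by simp
    have "((\<lambda>l. rho l * (r l)\<^sup>2) has_integral (G l0 * (1/(4*pi)))) {0..l0}"
    proof (rule has_integral_spike_finite[of "{0}", OF _ _ I0])
      fix x assume x: "x \<in> {0..l0} - {0}"
      then have x0: "x > 0" by auto
      have "deriv G x / (r x)\<^sup>2 = 4 * pi * rho x" using gauss[OF x0] unfolding G_def[abs_def] by simp
      moreover have "(r x)\<^sup>2 > 0" using rpos[OF x0] by simp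
      ultimately have "deriv G x = 4 * pi * rho x * (r x)\<^sup>2" by (simp add: divide_eq_eq)
      then show "rho x * (r x)\<^sup>2 = deriv G x * (1/(4*pi))" by simp
    qed simp
    then have "integral {0..l0} (\<lambda>l. rho l * (r l)\<^sup>2) = G l0 * (1/(4*pi))" by (rule integral_unique)
    then show ?thesis using charge by simp
  qed
  have EQ: "E l = Q / (r l)\<^sup>2" if "l \<ge> l0" for l
  proof -
    have "E l * (r l)\<^sup>2 = Q" using Gc[OF that] QG unfolding G_def by simp
    moreover have "(r l)\<^sup>2 > 0" using rpos[of l] that l0 by simp
    ultimately show ?thesis by (simp add: eq_divide_eq)
  qed
  define F where "F l = m l + Q\<^sup>2 / (2 * r l)" for l
  have Fc: "F l = F l0" if "l \<ge> l0" for l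
  proof (rule DERIV_isconst2[of l0 "l+1"])
    show "continuous_on {l0..l+1} F" unfolding F_def
    proof (intro continuous_intros contm contr ballI)
      fix x assume "x \<in> {l0..l+1}"
      then have "r x > 0" using rpos l0 by auto
      then show "2 * r x \<noteq> 0" by simp
    qed
    fix x assume x: "l0 < x" "x < l + 1"
    have x0: "x > 0" and rx: "r x > 0" using x l0 rpos by auto
    have mux: "mu x = (Q / (r x)\<^sup>2)\<^sup>2 / (8 * pi)" using ev_mu[of x] EQ[of x] x by auto
    have d1: "(m has_real_derivative Q\<^sup>2 * deriv r x / (2 * (r x)\<^sup>2)) (at x)"
      using dm[OF x0] unfolding mux ev_j[OF x(1)] t1[OF rx] .
    have d2: "((\<lambda>l. Q\<^sup>2 / (2 * r l)) has_real_derivative - (Q\<^sup>2 * deriv r x) / (2 * (r x)\<^sup>2)) (at x)"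
      using smooth_D[OF sr, of x] rx
      by (auto intro!: derivative_eq_intros simp: field_simps power2_eq_square)
    have "(F has_real_derivative Q\<^sup>2 * deriv r x / (2 * (r x)\<^sup>2) + - (Q\<^sup>2 * deriv r x) / (2 * (r x)\<^sup>2)) (at x)"
      unfolding F_def[abs_def] by (rule DERIV_add[OF d1 d2])
    then show "(F has_real_derivative 0) (at x)" by simp
  qed (use that in auto)
  have R0: "r l0 > 0" using rpos l0 by auto
  have Qpos: "\<bar>Q\<bar> > 0" using bound R0 by auto
  obtain b where b: "b \<ge> l0" "r b \<ge> \<bar>Q\<bar>" using big_r[OF rinf] by blast
  obtain ls where ls: "l0 \<le> ls" "ls \<le> b" "r ls = \<bar>Q\<bar>"
    using IVT'[of r l0 "\<bar>Q\<bar>" b] b bound R0 contr by force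
  have "1 - 2 * m ls / r ls > 0" using fpos[OF ls(1)] frel[of ls] ls l0 by auto
  then have mls: "m ls < \<bar>Q\<bar> / 2" using ls Qpos t3 by auto
  have "F ls = m ls + \<bar>Q\<bar> / 2" unfolding F_def ls(3) using t4[OF Qpos] .
  then have Fls: "F ls < \<bar>Q\<bar>" using mls by simp
  have "\<bar>Q\<bar> \<le> Q\<^sup>2 / (2 * r l0)"
  proof -
    have "\<bar>Q\<bar> * (2 * r l0) \<le> \<bar>Q\<bar> * \<bar>Q\<bar>" using bound Qpos by (intro mult_left_mono) auto
    then show ?thesis using t5[OF R0] by blast
  qed
  then have "F l0 \<ge> \<bar>Q\<bar>" unfolding F_def using ml0 by simp
  then show False using Fc[OF ls(1)] Fls by simp
qed

end
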